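(* Let $\Omega\subset\mathbb{R}^2$ have properties (i) and $( ** )$. Then for every $\omega^\diamond=(p,q)\in\Omega^\diamond$, the line $L(\omega^\diamond)=\{(x,y)\in\mathbb{R}^2:px-qy=1\}$ is not parallel to either of the boundary rays $l_0,l_1$ of the cone $C=\operatorname{cl}(\mathbb{R}_+\Omega)$. This holds also when the rays $l_0$ and $l_1$ coincide (i.e. when $\dim\Omega=1$).
   Context: $\mathbb{R}_+=[0,\infty)$; points of $\mathbb{R}^{2*}$ are $(p,q)$. Property (i): $\Omega$ nonempty, convex, closed, $0\notin\Omega$, $\lambda\Omega\subset\Omega$ for $\lambda>1$. Property $( ** )$: $\partial C=l_0\cup l_1$ where $l_0,l_1$ are the (possibly coinciding) boundary rays from the origin of the closed cone $C=\operatorname{cl}(\mathbb{R}_+\Omega)$, and $\operatorname{dist}(l_0,\Omega)=\operatorname{dist}(l_1,\Omega)=0$. Antipolar: $\Omega^\diamond=\{(p,q):px-qy\ge1\ \forall(x,y)\in\Omega\}$. *)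

theory Defs
  imports "HOL-Analysis.Analysis"
begin

definition prop_i :: "(real \<times> real) set \<Rightarrow> bool" where
  "prop_i \<Omega> \<longleftrightarrow> \<Omega> \<noteq> {} \<and> convex \<Omega> \<and> closed \<Omega> \<and> (0::real\<times>real) \<notin> \<Omega> \<and>
     (\<forall>c::real. c > 1 \<longrightarrow> ((\<lambda>x. c *\<^sub>R x) ` \<Omega>) \<subseteq> \<Omega>)"

definition cone_of :: "(real \<times> real) set \<Rightarrow> (real \<times> real) set" where
  "cone_of \<Omega> = closure {t *\<^sub>R w | t w. t \<ge> 0 \<and> w \<in> \<Omega>}"

definition ray :: "real \<times> real \<Rightarrow> (real \<times> real) set" where
  "ray v = {t *\<^sub>R v | t. t \<ge> 0}"

definition antipolar :: "(real \<times> real) set \<Rightarrow> (real \<times> real) set" where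
  "antipolar \<Omega> = {(p, q). \<forall>(x, y) \<in> \<Omega>. p * x - q * y \<ge> 1}"

definition lineL :: "real \<times> real \<Rightarrow> (real \<times> real) set" where
  "lineL w = {(x, y). fst w * x - snd w * y = 1}"

definition parallel_dir :: "(real \<times> real) set \<Rightarrow> real \<times> real \<Rightarrow> bool" where
  "parallel_dir L v \<longleftrightarrow> (\<forall>z \<in> L. \<forall>t::real. z + t *\<^sub>R v \<in> L)"

end

theory Submission
  imports Defs
begin

lemma key:
  fixes \<Omega> :: "(real \<times> real) set" and v :: "real \<times> real" and p q :: real
  assumes ne: "\<Omega> \<noteq> {}" and sd: "setdist (ray v) \<Omega> = 0"
    and w: "(p, q) \<in> antipolar \<Omega>" and par: "parallel_dir (lineL (p, q)) v"
  shows False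
proof -
  have A: "\<And>x y. (x, y) \<in> \<Omega> \<Longrightarrow> p * x - q * y \<ge> 1" using w by (auto simp: antipolar_def)
  obtain x0 y0 where "(x0, y0) \<in> \<Omega>" using ne by auto
  then have "p * x0 - q * y0 \<ge> 1" by (rule A)
  then have pq: "p \<noteq> 0 \<or> q \<noteq> 0" by auto
  define z where "z = (if p \<noteq> 0 then (1/p, 0) else (0, - 1/q))"
  have zL: "z \<in> lineL (p, q)" using pq by (auto simp: z_def lineL_def)
  have "z + 1 *\<^sub>R v \<in> lineL (p, q)" using par zL unfolding parallel_dir_def by blast
  then have fv: "p * fst v - q * snd v = 0" using zL
    by (cases z, cases v) (auto simp: lineL_def algebra_simps)
  define K where "K = \<bar>p\<bar> + \<bar>q\<bar> + 1"
  have K: "K > 0" by (simp add: K_def add_nonneg_pos)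
  have "setdist (ray v) \<Omega> < 1 / K" using sd K by simp
  moreover have "0 *\<^sub>R v \<in> ray v" unfolding ray_def by blast
  then have "ray v \<noteq> {}" by blast
  ultimately obtain r y where r: "r \<in> ray v" and y: "y \<in> \<Omega>" and d: "dist r y < 1 / K"
    using setdist_ltE ne by metis
  obtain t where rt: "r = t *\<^sub>R v" using r unfolding ray_def by auto
  have fr: "p * fst r - q * snd r = 0" using fv rt by (simp add: algebra_simps)
  have fy: "p * fst y - q * snd y \<ge> 1" using A y by (cases y) auto
  define a where "a = fst y - fst r"
  define b where "b = snd y - snd r"
  have "(a, b) = y - r" by (simp add: a_def b_def prod_eq_iff)
  then have nab: "norm (a, b) = dist r y" by (simp add: dist_norm norm_minus_commute)
  have "\<bar>a\<bar> \<le> norm (a, b)" using norm_fst_le[of a b] by simp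
  moreover have "\<bar>b\<bar> \<le> norm (a, b)" using norm_snd_le[of b a] by simp
  ultimately have "\<bar>p * a - q * b\<bar> \<le> (\<bar>p\<bar> + \<bar>q\<bar>) * norm (a, b)"
  proof -
    assume ha: "\<bar>a\<bar> \<le> norm (a, b)" and hb: "\<bar>b\<bar> \<le> norm (a, b)"
    have "\<bar>p * a - q * b\<bar> \<le> \<bar>p\<bar> * \<bar>a\<bar> + \<bar>q\<bar> * \<bar>b\<bar>"
      by (metis abs_mult abs_triangle_ineq4)
    also have "\<dots> \<le> \<bar>p\<bar> * norm (a, b) + \<bar>q\<bar> * norm (a, b)"
      by (intro add_mono mult_left_mono ha hb) auto
    finally show ?thesis by (simp add: algebra_simps)
  qed
  also have "\<dots> \<le> K * norm (a, b)" by (simp add: K_def mult_right_mono)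
  also have "\<dots> < K * (1 / K)" using d nab K by (simp only: mult_strict_left_mono)
  also have "\<dots> = 1" using K by simp
  finally have "\<bar>p * a - q * b\<bar> < 1" .
  moreover have "p * a - q * b = (p * fst y - q * snd y) - (p * fst r - q * snd r)"
    by (simp add: a_def b_def algebra_simps)
  ultimately show False using fr fy by simp
qed

theorem lemma6:
  fixes \<Omega> :: "(real \<times> real) set" and v0 v1 :: "real \<times> real"
  assumes "prop_i \<Omega>"
    and "v0 \<noteq> 0" and "v1 \<noteq> 0"
    and "frontier (cone_of \<Omega>) = ray v0 \<union> ray v1"
    and "setdist (ray v0) \<Omega> = 0" and "setdist (ray v1) \<Omega> = 0"
  shows "\<forall>w \<in> antipolar \<Omega>. \<not> parallel_dir (lineL w) v0 \<and> \<not> parallel_dir (lineL w) v1"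
proof -
  have ne: "\<Omega> \<noteq> {}" using assms(1) by (simp add: prop_i_def)
  show ?thesis
  proof (intro ballI conjI notI)
    fix w assume "w \<in> antipolar \<Omega>" "parallel_dir (lineL w) v0"
    then show False using key[OF ne assms(5), of "fst w" "snd w"] by simp
  next
    fix w assume "w \<in> antipolar \<Omega>" "parallel_dir (lineL w) v1"
    then show False using key[OF ne assms(6), of "fst w" "snd w"] by simp
  qed
qed

end
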